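(* Let $R$ be a partially ordered commutative ring. Then (1) $R$ is archimedean if and only if all finitely generated subrings of $R$ are archimedean; (2) $R$ is strongly localizable if and only if all finitely generated subrings of $R$ are strongly localizable.
   Context: Rings are commutative with unit $1$; subrings contain $1$ and carry the induced order ($S^+=S\cap R^+$). A partially ordered commutative ring is a commutative ring with a partial order $\le$ with $r\le s\Rightarrow r+t\le s+t$, whose positive cone $R^+=\{r:0\le r\}$ is closed under multiplication and contains all squares. $\mathbb{N}=\{1,2,\dots\}$. $R$ is archimedean if whenever $g,h\in R$ satisfy $kg+h\in R^+$ for all $k\in\mathbb{N}$, then $g\in R^+$. $\mathrm{Loc}(R)$ is the set of $s\in 1+R^+$ such that for all $r\in R$, $rs\in R^+$ implies $r\in R^+$. $R$ is strongly localizable if $r^2\in R^+$ for all $r\in R$ and $\mathrm{Loc}(R)=1+R^+$. *)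

theory Defs
  imports Main
begin

definition po_comm_ring :: "('a::comm_ring_1 \<Rightarrow> 'a \<Rightarrow> bool) \<Rightarrow> bool" where
  "po_comm_ring le \<longleftrightarrow>
     (\<forall>x. le x x) \<and>
     (\<forall>x y z. le x y \<longrightarrow> le y z \<longrightarrow> le x z) \<and>
     (\<forall>x y. le x y \<longrightarrow> le y x \<longrightarrow> x = y) \<and>
     (\<forall>r s t. le r s \<longrightarrow> le (r + t) (s + t)) \<and>
     (\<forall>r s. le 0 r \<longrightarrow> le 0 s \<longrightarrow> le 0 (r * s)) \<and>
     (\<forall>r. le 0 (r * r))"

definition pos_cone :: "('a::comm_ring_1 \<Rightarrow> 'a \<Rightarrow> bool) \<Rightarrow> 'a set \<Rightarrow> 'a set" where
  "pos_cone le S = {r \<in> S. le 0 r}"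

definition is_subring :: "'a::comm_ring_1 set \<Rightarrow> bool" where
  "is_subring S \<longleftrightarrow> 1 \<in> S \<and> (\<forall>x\<in>S. \<forall>y\<in>S. x + y \<in> S \<and> x - y \<in> S \<and> x * y \<in> S)"

definition subring_gen :: "'a::comm_ring_1 set \<Rightarrow> 'a set" where
  "subring_gen F = \<Inter>{S. is_subring S \<and> F \<subseteq> S}"

definition archimedean_on :: "('a::comm_ring_1 \<Rightarrow> 'a \<Rightarrow> bool) \<Rightarrow> 'a set \<Rightarrow> bool" where
  "archimedean_on le S \<longleftrightarrow>
     (\<forall>g\<in>S. \<forall>h\<in>S. (\<forall>k::nat. k \<ge> 1 \<longrightarrow> of_nat k * g + h \<in> pos_cone le S)
        \<longrightarrow> g \<in> pos_cone le S)"

definition Loc :: "('a::comm_ring_1 \<Rightarrow> 'a \<Rightarrow> bool) \<Rightarrow> 'a set \<Rightarrow> 'a set" where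
  "Loc le S = {s \<in> (\<lambda>p. 1 + p) ` pos_cone le S.
                 \<forall>r\<in>S. r * s \<in> pos_cone le S \<longrightarrow> r \<in> pos_cone le S}"

definition strongly_localizable_on :: "('a::comm_ring_1 \<Rightarrow> 'a \<Rightarrow> bool) \<Rightarrow> 'a set \<Rightarrow> bool" where
  "strongly_localizable_on le S \<longleftrightarrow>
     (\<forall>r\<in>S. r ^ 2 \<in> pos_cone le S) \<and> Loc le S = (\<lambda>p. 1 + p) ` pos_cone le S"

end

theory Submission
  imports Defs
begin

lemma sg_sub: "is_subring (subring_gen F)"
  unfolding is_subring_def subring_gen_def by auto

lemma sg_F: "F \<subseteq> subring_gen F"
  unfolding subring_gen_def by auto

lemma sg_1: "1 \<in> subring_gen F"
  using sg_sub unfolding is_subring_def by auto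

lemma sg_add: "x \<in> subring_gen F \<Longrightarrow> y \<in> subring_gen F \<Longrightarrow> x + y \<in> subring_gen F"
  using sg_sub unfolding is_subring_def by blast

lemma sg_mult: "x \<in> subring_gen F \<Longrightarrow> y \<in> subring_gen F \<Longrightarrow> x * y \<in> subring_gen F"
  using sg_sub unfolding is_subring_def by blast

lemma sg_0: "0 \<in> subring_gen F"
proof -
  have "1 - 1 \<in> subring_gen F" using sg_sub sg_1 unfolding is_subring_def by blast
  then show ?thesis by simp
qed

theorem proposition6:
  fixes le :: "'a::comm_ring_1 \<Rightarrow> 'a \<Rightarrow> bool"
  assumes "po_comm_ring le"
  shows "(archimedean_on le UNIV \<longleftrightarrow>
            (\<forall>F. finite F \<longrightarrow> archimedean_on le (subring_gen F)))
       \<and> (strongly_localizable_on le UNIV \<longleftrightarrow>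
            (\<forall>F. finite F \<longrightarrow> strongly_localizable_on le (subring_gen F)))"
proof
  have sq: "\<And>r. le 0 (r * r)" using assms unfolding po_comm_ring_def by blast
  show "archimedean_on le UNIV \<longleftrightarrow>
            (\<forall>F. finite F \<longrightarrow> archimedean_on le (subring_gen F))"
  proof
    assume A: "archimedean_on le UNIV"
    show "\<forall>F. finite F \<longrightarrow> archimedean_on le (subring_gen F)"
      using A unfolding archimedean_on_def pos_cone_def by blast
  next
    assume A: "\<forall>F. finite F \<longrightarrow> archimedean_on le (subring_gen F)"
    show "archimedean_on le UNIV"
      unfolding archimedean_on_def
    proof (intro ballI impI)
      fix g h :: 'a
      assume k: "\<forall>k::nat. k \<ge> 1 \<longrightarrow> of_nat k * g + h \<in> pos_cone le UNIV"
      let ?S = "subring_gen {g, h}"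
      have gS: "g \<in> ?S" and hS: "h \<in> ?S" using sg_F[of "{g, h}"] by auto
      have "\<forall>k::nat. k \<ge> 1 \<longrightarrow> of_nat k * g + h \<in> pos_cone le ?S"
      proof (intro allI impI)
        fix k :: nat assume "k \<ge> 1"
        have "of_nat k \<in> ?S"
          by (induction k) (auto intro: sg_add sg_1 sg_0 simp: sg_sub[unfolded is_subring_def])
        then have "of_nat k * g + h \<in> ?S" using gS hS sg_add sg_mult by blast
        then show "of_nat k * g + h \<in> pos_cone le ?S"
          using k \<open>k \<ge> 1\<close> unfolding pos_cone_def by blast
      qed
      then have "g \<in> pos_cone le ?S" using A gS hS unfolding archimedean_on_def by blast
      then show "g \<in> pos_cone le UNIV" unfolding pos_cone_def by blast
    qed
  qed
  show "strongly_localizable_on le UNIV \<longleftrightarrow>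
            (\<forall>F. finite F \<longrightarrow> strongly_localizable_on le (subring_gen F))"
  proof
    assume A: "strongly_localizable_on le UNIV"
    show "\<forall>F. finite F \<longrightarrow> strongly_localizable_on le (subring_gen F)"
    proof (intro allI impI)
      fix F :: "'a set"
      let ?S = "subring_gen F"
      have "Loc le ?S = (\<lambda>p. 1 + p) ` pos_cone le ?S"
      proof
        show "Loc le ?S \<subseteq> (\<lambda>p. 1 + p) ` pos_cone le ?S" unfolding Loc_def by blast
      next
        show "(\<lambda>p. 1 + p) ` pos_cone le ?S \<subseteq> Loc le ?S"
        proof
          fix s assume "s \<in> (\<lambda>p. 1 + p) ` pos_cone le ?S"
          then obtain p where p: "p \<in> ?S" "le 0 p" "s = 1 + p"
            unfolding pos_cone_def by blast
          have "s \<in> Loc le UNIV" using A p unfolding strongly_localizable_on_def pos_cone_def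
            by auto
          then have L: "\<forall>r. le 0 (r * s) \<longrightarrow> le 0 r" unfolding Loc_def pos_cone_def by auto
          show "s \<in> Loc le ?S"
            unfolding Loc_def using p L unfolding pos_cone_def by auto
        qed
      qed
      moreover have "\<forall>r\<in>?S. r ^ 2 \<in> pos_cone le ?S"
        using sq sg_mult unfolding pos_cone_def power2_eq_square by blast
      ultimately show "strongly_localizable_on le ?S"
        unfolding strongly_localizable_on_def by blast
    qed
  next
    assume A: "\<forall>F. finite F \<longrightarrow> strongly_localizable_on le (subring_gen F)"
    have "Loc le UNIV = (\<lambda>p. 1 + p) ` pos_cone le UNIV"
    proof
      show "Loc le UNIV \<subseteq> (\<lambda>p. 1 + p) ` pos_cone le UNIV" unfolding Loc_def by blast
    next
      show "(\<lambda>p. 1 + p) ` pos_cone le UNIV \<subseteq> Loc le UNIV"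
      proof
        fix s assume "s \<in> (\<lambda>p. 1 + p) ` pos_cone le UNIV"
        then obtain p where p: "le 0 p" "s = 1 + p"
          unfolding pos_cone_def by blast
        have "\<forall>r. le 0 (r * s) \<longrightarrow> le 0 r"
        proof (intro allI impI)
          fix r assume rs: "le 0 (r * s)"
          let ?S = "subring_gen {p, r}"
          have pS: "p \<in> ?S" and rS: "r \<in> ?S" using sg_F[of "{p, r}"] by auto
          have sS: "s \<in> ?S" using p sg_add sg_1 pS by blast
          have "s \<in> (\<lambda>p. 1 + p) ` pos_cone le ?S" using p pS unfolding pos_cone_def by blast
          then have "s \<in> Loc le ?S" using A unfolding strongly_localizable_on_def by auto
          moreover have "r * s \<in> pos_cone le ?S" using rs rS sS sg_mult unfolding pos_cone_def by blast
          ultimately have "r \<in> pos_cone le ?S" using rS unfolding Loc_def by blast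
          then show "le 0 r" unfolding pos_cone_def by blast
        qed
        then show "s \<in> Loc le UNIV" using p unfolding Loc_def pos_cone_def by auto
      qed
    qed
    moreover have "\<forall>r\<in>UNIV. r ^ 2 \<in> pos_cone le UNIV"
      using sq unfolding pos_cone_def power2_eq_square by blast
    ultimately show "strongly_localizable_on le UNIV"
      unfolding strongly_localizable_on_def by blast
  qed
qed

end
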